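(* Let $t\ge 2$ be an integer. For every integer $n\ge 1$, $$ex(n,n,n,K_{2,t}) \le \frac{3}{2}\, n\Big(1+\sqrt{2(t-1)(n-1)+1}\Big).$$
   Context: $K_{2,t}$ denotes the complete bipartite graph with parts of sizes $2$ and $t$. For an integer $n\ge1$, $ex(n,n,n,K_{2,t})$ is the maximum number of edges in a tripartite graph with three vertex classes each of size $n$ (edges only between different classes) that contains no subgraph isomorphic to $K_{2,t}$. *)

theory Defs
  imports Complex_Main
begin

text \<open>Vertex set of the tripartite host: class i in {0,1,2}, index j < n.\<close>
definition tri_vertices :: "nat \<Rightarrow> (nat \<times> nat) set" where
  "tri_vertices n = {0..<3} \<times> {0..<n}"

definition tripartite_graph :: "nat \<Rightarrow> (nat \<times> nat) set set \<Rightarrow> bool" where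
  "tripartite_graph n E \<longleftrightarrow>
     (\<forall>e\<in>E. \<exists>u v. e = {u, v} \<and> u \<in> tri_vertices n \<and> v \<in> tri_vertices n \<and> fst u \<noteq> fst v)"

definition contains_K2t :: "nat \<Rightarrow> 'v set set \<Rightarrow> bool" where
  "contains_K2t t E \<longleftrightarrow>
     (\<exists>a b T. a \<noteq> b \<and> finite T \<and> card T = t \<and> a \<notin> T \<and> b \<notin> T \<and>
        (\<forall>x\<in>T. {a, x} \<in> E \<and> {b, x} \<in> E))"

definition ex_tri_K2t :: "nat \<Rightarrow> nat \<Rightarrow> nat" where
  "ex_tri_K2t n t = Max {card E | E. tripartite_graph n E \<and> \<not> contains_K2t t E}"

end

theory Submission
  imports Defs
begin

lemma cs_sum:
  fixes f :: "'a \<Rightarrow> real"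
  assumes "finite A"
  shows "(sum f A)^2 \<le> real (card A) * sum (\<lambda>x. (f x)^2) A"
proof (cases "A = {}")
  case True then show ?thesis by simp
next
  case False
  hence N: "real (card A) > 0" using assms by (simp add: card_gt_0_iff)
  define mu where "mu = sum f A / real (card A)"
  have "0 \<le> sum (\<lambda>x. (f x - mu)^2) A" by (intro sum_nonneg) simp
  also have "\<dots> = sum (\<lambda>x. (f x)^2) A - 2 * mu * sum f A + real (card A) * mu^2"
    by (simp add: power2_diff sum.distrib sum_subtractf sum_distrib_left sum_distrib_right algebra_simps)
  also have "\<dots> = sum (\<lambda>x. (f x)^2) A - (sum f A)^2 / real (card A)"
    using N by (simp add: mu_def field_simps power2_eq_square)
  finally have "(sum f A)^2 / real (card A) \<le> sum (\<lambda>x. (f x)^2) A" by simp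
  thus ?thesis using N by (simp add: field_simps)
qed

lemma card_filter_sum:
  assumes "finite A"
  shows "card {x\<in>A. P x} = (\<Sum>x\<in>A. if P x then 1 else 0::nat)"
  using assms by (simp add: sum.inter_filter[symmetric])

lemma main_bound:
  fixes n t :: nat and E :: "(nat \<times> nat) set set"
  assumes t2: "t \<ge> 2" and n1: "n \<ge> 1" and G: "tripartite_graph n E" and F: "\<not> contains_K2t t E"
  shows "real (card E) \<le> 3 / 2 * real n * (1 + sqrt (2 * (real t - 1) * (real n - 1) + 1))"
proof -
  define V where "V = tri_vertices n"
  have finV: "finite V" and cardV: "card V = 3*n"
    by (simp_all add: V_def tri_vertices_def card_cartesian_product)
  have edge: "\<And>e. e \<in> E \<Longrightarrow> \<exists>u v. e = {u,v} \<and> u\<in>V \<and> v\<in>V \<and> fst u \<noteq> fst v"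
    using G by (auto simp: tripartite_graph_def V_def)
  have inV: "x \<in> V \<and> y \<in> V \<and> fst x \<noteq> fst y" if xyE: "{x,y} \<in> E" for x y
  proof -
    obtain u v where "{x,y} = {u,v}" "u\<in>V" "v\<in>V" "fst u \<noteq> fst v" using edge[OF xyE] by blast
    thus ?thesis by (auto simp: doubleton_eq_iff)
  qed
  have noloop: "{a,a} \<notin> E" for a using inV[of a a] by blast
  define N where "N x = {y\<in>V. {x,y}\<in>E}" for x
  define d where "d x = card (N x)" for x
  have finN: "finite (N x)" for x using finV by (simp add: N_def)
  have common: "card {x\<in>V. {x,a}\<in>E \<and> {x,b}\<in>E} \<le> t - 1" if ab: "a \<noteq> b" for a b
  proof (rule ccontr)
    assume "\<not> ?thesis"
    then have "t \<le> card {x\<in>V. {x,a}\<in>E \<and> {x,b}\<in>E}" by simp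
    then obtain T where T: "T \<subseteq> {x\<in>V. {x,a}\<in>E \<and> {x,b}\<in>E}" "card T = t" "finite T"
      by (rule obtain_subset_with_card_n)
    have "a \<notin> T" using T noloop by blast
    moreover have "b \<notin> T" using T noloop by blast
    ultimately have "contains_K2t t E" unfolding contains_K2t_def
      using ab T by (intro exI[of _ a] exI[of _ b] exI[of _ T]) (auto simp: insert_commute)
    with F show False by simp
  qed
  have finE: "finite E"
  proof (rule finite_subset[of E "Pow V"])
    show "E \<subseteq> Pow V" using edge by blast
  qed (use finV in simp)
  define A where "A = {p\<in>V\<times>V. {fst p, snd p}\<in>E}"
  have finA: "finite A" using finV by (simp add: A_def)
  have "A = Sigma V N" by (auto simp: A_def N_def)
  hence sumd: "sum d V = card A" using finV finN by (simp add: d_def)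
  have grp: "(\<Sum>e\<in>E. card {p\<in>A. {fst p, snd p} = e}) = card A"
  proof -
    have "(\<Sum>e\<in>E. \<Sum>p\<in>{p. p\<in>A \<and> (\<lambda>p. {fst p, snd p}) p = e}. 1::nat) = (\<Sum>p\<in>A. 1)"
      by (rule sum.group) (use finA finE in \<open>auto simp: A_def\<close>)
    thus ?thesis by simp
  qed
  have "2 \<le> card {p. p \<in> A \<and> {fst p, snd p} = e}" if eE: "e \<in> E" for e
  proof -
    obtain u v where uv: "e = {u,v}" "u\<in>V" "v\<in>V" "fst u \<noteq> fst v" using edge[OF eE] by blast
    hence "u \<noteq> v" by auto
    have sub: "{(u,v),(v,u)} \<subseteq> {p. p \<in> A \<and> {fst p, snd p} = e}"
      using uv eE by (auto simp: A_def insert_commute)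
    have c2: "card {(u,v),(v,u)} = 2" using \<open>u \<noteq> v\<close> by simp
    have fin: "finite {p. p \<in> A \<and> {fst p, snd p} = e}" using finA by simp
    show ?thesis using card_mono[OF fin sub] c2 by simp
  qed
  hence "(\<Sum>e\<in>E. 2) \<le> (\<Sum>e\<in>E. card {p\<in>A. {fst p, snd p} = e})" by (intro sum_mono) simp
  hence "(\<Sum>e\<in>E. 2) \<le> card A" using grp by simp
  hence fact1: "2 * card E \<le> sum d V" using sumd by simp
  define L where "L x = (\<Sum>a\<in>N x. card {b\<in>N x. fst b = fst a \<and> b \<noteq> a})" for x
  have fact2: "real (d x)^2 \<le> 2 * real (L x) + 2 * real (d x)" if xV: "x \<in> V" for x
  proof -
    define P where "P c = {b\<in>N x. fst b = c}" for c
    define c1 where "c1 = (fst x + 1) mod 3"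
    define c2 where "c2 = (fst x + 2) mod 3"
    have fx: "fst x < 3" using xV by (auto simp: V_def tri_vertices_def)
    have c12: "c1 \<noteq> c2" unfolding c1_def c2_def by presburger
    have cover: "fst b = c1 \<or> fst b = c2" if "b \<in> N x" for b
    proof -
      have "fst b < 3" "fst b \<noteq> fst x" using that inV[of x b] by (auto simp: N_def V_def tri_vertices_def)
      thus ?thesis using fx unfolding c1_def c2_def by presburger
    qed
    have NU: "N x = P c1 \<union> P c2" using cover by (auto simp: P_def)
    have disj: "P c1 \<inter> P c2 = {}" using c12 by (auto simp: P_def)
    have finP: "finite (P c)" for c using finN[of x] by (simp add: P_def)
    have eqP: "{b\<in>N x. fst b = fst a} = P c" if "a \<in> P c" for a c
      using that by (auto simp: P_def)
    have "(\<Sum>a\<in>N x. card {b\<in>N x. fst b = fst a}) =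
          (\<Sum>a\<in>P c1. card {b\<in>N x. fst b = fst a}) + (\<Sum>a\<in>P c2. card {b\<in>N x. fst b = fst a})"
      unfolding NU using finP disj by (simp add: sum.union_disjoint)
    also have "\<dots> = card (P c1) * card (P c1) + card (P c2) * card (P c2)"
      using eqP by simp
    finally have s1: "(\<Sum>a\<in>N x. card {b\<in>N x. fst b = fst a}) = card (P c1) * card (P c1) + card (P c2) * card (P c2)" .
    have dx: "d x = card (P c1) + card (P c2)" unfolding d_def NU using finP disj by (simp add: card_Un_disjoint)
    have s2: "card {b\<in>N x. fst b = fst a} = card {b\<in>N x. fst b = fst a \<and> b \<noteq> a} + 1" if "a \<in> N x" for a
    proof -
      have "{b\<in>N x. fst b = fst a \<and> b \<noteq> a} = {b\<in>N x. fst b = fst a} - {a}" by auto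
      moreover have "a \<in> {b\<in>N x. fst b = fst a}" using that by simp
      moreover have "finite {b\<in>N x. fst b = fst a}" using finN[of x] by simp
      ultimately show ?thesis using card.remove by fastforce
    qed
    have "(\<Sum>a\<in>N x. card {b\<in>N x. fst b = fst a}) = (\<Sum>a\<in>N x. card {b\<in>N x. fst b = fst a \<and> b \<noteq> a} + 1)"
      by (rule sum.cong[OF refl]) (rule s2)
    also have "\<dots> = L x + d x" unfolding L_def d_def by (simp only: sum.distrib card_eq_sum[symmetric])
    finally have "(\<Sum>a\<in>N x. card {b\<in>N x. fst b = fst a}) = L x + d x" .
    hence "real (L x) + real (d x) = real (card (P c1)) * real (card (P c1)) + real (card (P c2)) * real (card (P c2))"
      using s1 by (metis of_nat_add of_nat_mult)
    moreover have "0 \<le> (real (card (P c1)) - real (card (P c2)))^2" by simp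
    ultimately show ?thesis using dx by (simp add: power2_eq_square algebra_simps)
  qed
  define I where "I x a b = (if {x,a}\<in>E \<and> {x,b}\<in>E \<and> fst b = fst a \<and> b \<noteq> a then 1 else 0::nat)" for x a b
  have gen: "sum g (N x) = (\<Sum>a\<in>V. if {x,a}\<in>E then g a else 0)" for g :: "nat \<times> nat \<Rightarrow> nat" and x
    using finV by (simp add: N_def sum.inter_filter)
  have Lx: "L x = (\<Sum>a\<in>V. \<Sum>b\<in>V. I x a b)" for x
  proof -
    have "L x = (\<Sum>a\<in>V. if {x,a}\<in>E then card {b\<in>N x. fst b = fst a \<and> b \<noteq> a} else 0)"
      unfolding L_def by (rule gen)
    also have "\<dots> = (\<Sum>a\<in>V. \<Sum>b\<in>V. I x a b)"
    proof (rule sum.cong[OF refl])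
      fix a assume "a \<in> V"
      have "card {b\<in>N x. fst b = fst a \<and> b \<noteq> a} = card {b\<in>V. {x,b}\<in>E \<and> fst b = fst a \<and> b \<noteq> a}"
        unfolding N_def by (rule arg_cong[where f=card]) auto
      also have "\<dots> = (\<Sum>b\<in>V. if {x,b}\<in>E \<and> fst b = fst a \<and> b \<noteq> a then 1 else 0)"
        using finV by (rule card_filter_sum)
      finally show "(if {x,a}\<in>E then card {b\<in>N x. fst b = fst a \<and> b \<noteq> a} else 0) = (\<Sum>b\<in>V. I x a b)"
        by (simp add: I_def)
    qed
    finally show ?thesis .
  qed
  have "(\<Sum>x\<in>V. L x) = (\<Sum>x\<in>V. \<Sum>a\<in>V. \<Sum>b\<in>V. I x a b)" by (simp add: Lx)
  also have "\<dots> = (\<Sum>a\<in>V. \<Sum>x\<in>V. \<Sum>b\<in>V. I x a b)" by (rule sum.swap)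
  also have "\<dots> = (\<Sum>a\<in>V. \<Sum>b\<in>V. \<Sum>x\<in>V. I x a b)" by (rule sum.cong[OF refl], rule sum.swap)
  also have "\<dots> \<le> (\<Sum>a\<in>V. \<Sum>b\<in>V. if fst b = fst a \<and> b \<noteq> a then t - 1 else 0)"
  proof (intro sum_mono)
    fix a b
    show "(\<Sum>x\<in>V. I x a b) \<le> (if fst b = fst a \<and> b \<noteq> a then t - 1 else 0)"
    proof (cases "fst b = fst a \<and> b \<noteq> a")
      case True
      have "(\<Sum>x\<in>V. I x a b) = (\<Sum>x\<in>V. if {x,a}\<in>E \<and> {x,b}\<in>E then 1 else 0)"
        using True by (intro sum.cong) (auto simp: I_def)
      also have "\<dots> = card {x\<in>V. {x,a}\<in>E \<and> {x,b}\<in>E}"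
        using finV by (rule card_filter_sum[symmetric])
      also have "\<dots> \<le> t - 1" using True by (intro common) auto
      finally show ?thesis using True by simp
    qed (auto simp: I_def)
  qed
  also have "\<dots> = (\<Sum>a\<in>V. (t - 1) * (n - 1))"
  proof (rule sum.cong[OF refl])
    fix a assume aV: "a \<in> V"
    have "(\<Sum>b\<in>V. if fst b = fst a \<and> b \<noteq> a then t - 1 else 0) = (t - 1) * card {b\<in>V. fst b = fst a \<and> b \<noteq> a}"
      using finV by (simp add: sum.inter_filter[symmetric])
    moreover have "{b\<in>V. fst b = fst a \<and> b \<noteq> a} = ({fst a} \<times> {0..<n}) - {a}"
      using aV by (auto simp: V_def tri_vertices_def)
    moreover have "a \<in> {fst a} \<times> {0..<n}" using aV by (auto simp: V_def tri_vertices_def)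
    ultimately show "(\<Sum>b\<in>V. if fst b = fst a \<and> b \<noteq> a then t - 1 else 0) = (t - 1) * (n - 1)"
      by (simp add: card_cartesian_product)
  qed
  also have "\<dots> = 3 * n * ((t - 1) * (n - 1))" using cardV by simp
  finally have fact3: "(\<Sum>x\<in>V. L x) \<le> 3 * n * ((t - 1) * (n - 1))" .
  define D where "D = (\<Sum>x\<in>V. real (d x))"
  define S2 where "S2 = (\<Sum>x\<in>V. real (d x)^2)"
  define K where "K = real (\<Sum>x\<in>V. L x)"
  have K: "K \<le> 3 * real n * ((real t - 1) * (real n - 1))"
  proof -
    have "K \<le> real (3 * n * ((t - 1) * (n - 1)))" unfolding K_def using fact3 by linarith
    also have "\<dots> = 3 * real n * ((real t - 1) * (real n - 1))" using t2 n1 by (simp add: of_nat_diff)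
    finally show ?thesis .
  qed
  have S2: "S2 \<le> 2 * K + 2 * D"
  proof -
    have "S2 \<le> (\<Sum>x\<in>V. 2 * real (L x) + 2 * real (d x))" unfolding S2_def by (rule sum_mono) (rule fact2)
    also have "\<dots> = 2 * K + 2 * D" by (simp add: K_def D_def sum.distrib sum_distrib_left)
    finally show ?thesis .
  qed
  have CS: "D^2 \<le> 3 * real n * S2" using cs_sum[OF finV, of "\<lambda>x. real (d x)"] cardV by (simp add: D_def S2_def)
  have E2: "2 * real (card E) \<le> D" 
  proof -
    have "real (2 * card E) \<le> real (sum d V)" using fact1 by (simp only: of_nat_le_iff)
    thus ?thesis unfolding D_def by simp
  qed
  define R where "R = 2 * (real t - 1) * (real n - 1) + 1"
  define \<delta> where "\<delta> = D / (3 * real n)"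
  have np: "real n > 0" using n1 by simp
  have Dd: "D = 3 * real n * \<delta>" using np by (simp add: \<delta>_def)
  have a: "3 * real n * S2 \<le> 3 * real n * (2 * K + 2 * D)" using S2 np by (intro mult_left_mono) auto
  have b: "3 * real n * (2 * K + 2 * D) \<le> 3 * real n * (2 * (3 * real n * ((real t - 1) * (real n - 1))) + 2 * D)"
    using K np by (intro mult_left_mono) linarith+
  have "D^2 \<le> 3 * real n * (2 * (3 * real n * ((real t - 1) * (real n - 1))) + 2 * D)"
    using CS a b by linarith
  hence "(3 * real n * \<delta>)^2 \<le> 3 * real n * (2 * (3 * real n * ((real t - 1) * (real n - 1))) + 2 * (3 * real n * \<delta>))"
    unfolding Dd .
  hence "(3 * real n)^2 * \<delta>^2 \<le> (3 * real n)^2 * (2 * ((real t - 1) * (real n - 1)) + 2 * \<delta>)"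
    by (simp add: power2_eq_square algebra_simps)
  hence "\<delta>^2 \<le> 2 * ((real t - 1) * (real n - 1)) + 2 * \<delta>" using np by simp
  hence "(\<delta> - 1)^2 \<le> R" unfolding R_def by (simp add: power2_eq_square algebra_simps)
  hence "\<delta> - 1 \<le> sqrt R" by (rule real_le_rsqrt)
  hence "\<delta> \<le> 1 + sqrt R" by simp
  hence "3 * real n * \<delta> \<le> 3 * real n * (1 + sqrt R)" using np by simp
  hence h: "2 * real (card E) \<le> 3 * real n * (1 + sqrt R)" using E2 Dd by linarith
  have "3 / 2 * real n * (1 + sqrt R) = (3 * real n * (1 + sqrt R)) / 2" by simp
  hence "real (card E) \<le> 3 / 2 * real n * (1 + sqrt R)" using h by linarith
  thus ?thesis unfolding R_def .
qed

theorem theorem1: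
  fixes n t :: nat
  assumes "t \<ge> 2" and "n \<ge> 1"
  shows "real (ex_tri_K2t n t) \<le>
           3 / 2 * real n * (1 + sqrt (2 * (real t - 1) * (real n - 1) + 1))"
proof -
  define V where "V = tri_vertices n"
  define \<S> where "\<S> = {E. tripartite_graph n E \<and> \<not> contains_K2t t E}"
  have finV: "finite V" by (simp add: V_def tri_vertices_def)
  have sub: "\<S> \<subseteq> Pow (Pow V)"
    by (auto simp: \<S>_def tripartite_graph_def V_def)
  have finS: "finite \<S>" using finite_subset[OF sub] finV by simp
  have "\<not> contains_K2t t {}"
  proof
    assume "contains_K2t t {}"
    then obtain T where "card T = t" "\<forall>x\<in>T. False" unfolding contains_K2t_def by auto
    hence "T = {}" by auto
    with \<open>card T = t\<close> assms(1) show False by simp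
  qed
  hence "{} \<in> \<S>" by (simp add: \<S>_def tripartite_graph_def)
  have eq: "{card E | E. tripartite_graph n E \<and> \<not> contains_K2t t E} = card ` \<S>"
    by (auto simp: \<S>_def)
  have "ex_tri_K2t n t \<in> card ` \<S>"
    unfolding ex_tri_K2t_def eq using finS \<open>{} \<in> \<S>\<close> by (intro Max_in) auto
  then obtain E where "E \<in> \<S>" "ex_tri_K2t n t = card E" by blast
  thus ?thesis using main_bound[OF assms] by (simp add: \<S>_def)
qed

end
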